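(* Let $a>0$ and $\phi_a(x)=e^{-ax^2}$. There is a constant $C>0$ (depending only on $a$) such that every $f=\sum_{k\in\mathbb{Z}}c_k\phi_a(\cdot-k)$ with $c\in\ell^\infty(\mathbb{Z})$ possesses an extension to an entire function satisfying $|f(x+iy)|\le C\|c\|_\infty e^{ay^2}$ for all $x,y\in\mathbb{R}$. *)

theory Defs
  imports "HOL-Analysis.Analysis"
begin

definition gauss :: "real \<Rightarrow> real \<Rightarrow> real" where
  "gauss a x = exp (- a * x\<^sup>2)"

definition gauss_series :: "real \<Rightarrow> (int \<Rightarrow> complex) \<Rightarrow> real \<Rightarrow> complex" where
  "gauss_series a c x = (\<Sum>\<^sub>\<infinity>k\<in>(UNIV::int set). c k * complex_of_real (gauss a (x - of_int k)))"

definition linf_norm :: "(int \<Rightarrow> complex) \<Rightarrow> real" where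
  "linf_norm c = (SUP k. norm (c k))"

end

theory Submission imports Defs "HOL-Complex_Analysis.Complex_Analysis" begin

definition T :: "real \<Rightarrow> int \<Rightarrow> complex \<Rightarrow> complex" where
  "T a k z = exp (- complex_of_real a * (z - of_int k)^2)"

lemma norm_T: "norm (T a k z) = exp (a * (Im z)^2 - a * (Re z - of_int k)^2)"
  by (simp add: T_def power2_eq_square algebra_simps)

lemma key_ineq:
  fixes a x :: real assumes "a \<ge> 0"
  shows "exp (- a * (x - of_int k)^2) \<le> exp (a + a * \<bar>x\<bar>) * exp (- a * \<bar>of_int k\<bar>)"
proof -
  define u where "u = x - of_int k"
  have "0 \<le> (\<bar>u\<bar> - 1)^2" by simp
  then have "0 \<le> \<bar>u\<bar>^2 - 2*\<bar>u\<bar> + 1" by (simp add: power2_diff)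
  then have 1: "u^2 \<ge> \<bar>u\<bar> - 1" by simp
  have 2: "\<bar>u\<bar> \<ge> \<bar>of_int k\<bar> - \<bar>x\<bar>" unfolding u_def by linarith
  have 3: "a * (\<bar>of_int k\<bar> - \<bar>x\<bar> - 1) \<le> a * u^2"
    using 1 2 assms by (intro mult_left_mono) auto
  have "- a * (x - of_int k)^2 \<le> a + a * \<bar>x\<bar> + (- a * \<bar>of_int k\<bar>)"
    using 3 unfolding u_def by (simp add: algebra_simps)
  then show ?thesis by (simp add: exp_add[symmetric])
qed

lemma g_summable:
  fixes a :: real assumes "a > 0"
  shows "(\<lambda>k::int. exp (- a * \<bar>of_int k\<bar>)) summable_on UNIV"
proof -
  let ?g = "\<lambda>k::int. exp (- a * \<bar>of_int k\<bar>)"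
  have geo: "(\<lambda>n::nat. exp (- a * real n)) summable_on UNIV"
  proof -
    have "summable (\<lambda>n::nat. exp (-a) ^ n)" using assms by (intro summable_geometric) simp
    then have "summable (\<lambda>n::nat. exp (- a * real n))"
      by (simp add: exp_of_nat2_mult[symmetric] mult.commute)
    then show ?thesis by (subst summable_on_UNIV_nonneg_real_iff) auto
  qed
  have A: "?g summable_on range int"
    by (subst summable_on_reindex) (use geo in \<open>auto simp: o_def\<close>)
  have B0: "(?g \<circ> (\<lambda>n::nat. - int n - 1)) summable_on UNIV"
    by (rule summable_on_comparison_test[OF geo]) (use assms in auto)
  have B: "?g summable_on range (\<lambda>n::nat. - int n - 1)"
    by (subst summable_on_reindex) (use B0 in \<open>auto simp: inj_on_def\<close>)
  have U: "UNIV = range int \<union> range (\<lambda>n::nat. - int n - 1)"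
  proof -
    have "k \<in> range int \<union> range (\<lambda>n::nat. - int n - 1)" for k :: int
    proof (cases "k \<ge> 0")
      case True then show ?thesis by (auto intro: image_eqI[of _ _ "nat k"])
    next
      case False then show ?thesis by (auto intro!: image_eqI[of _ _ "nat (- k - 1)"])
    qed
    then show ?thesis by auto
  qed
  show ?thesis
    by (subst U, rule summable_on_Un_disjoint[OF A B]) auto
qed

abbreviation g :: "real \<Rightarrow> int \<Rightarrow> real" where "g a k \<equiv> exp (- a * \<bar>of_int k\<bar>)"

lemma T_bound:
  assumes "a \<ge> 0"
  shows "norm (T a k z) \<le> exp (a * (Im z)^2) * exp (a + a * \<bar>Re z\<bar>) * g a k"
proof -
  have "norm (T a k z) = exp (a * (Im z)^2) * exp (- a * (Re z - of_int k)^2)"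
    by (simp add: norm_T exp_add[symmetric])
  also have "\<dots> \<le> exp (a * (Im z)^2) * (exp (a + a * \<bar>Re z\<bar>) * g a k)"
    by (intro mult_left_mono key_ineq assms) auto
  finally show ?thesis by simp
qed

definition Fc :: "real \<Rightarrow> (int \<Rightarrow> complex) \<Rightarrow> complex \<Rightarrow> complex" where
  "Fc a c z = (\<Sum>\<^sub>\<infinity>k\<in>UNIV. c k * T a k z)"

lemma Fc_hol:
  assumes a: "a > 0" and cB: "\<And>k. norm (c k) \<le> B"
  shows "Fc a c holomorphic_on UNIV"
proof -
  have B0: "0 \<le> B" using norm_ge_zero cB[of 0] by (rule order_trans)
  have "\<exists>f'. (Fc a c has_field_derivative f') (at z0)" for z0
  proof -
    define M where "M k = B * exp (a * (\<bar>Im z0\<bar> + 1)^2) * exp (a + a * (\<bar>Re z0\<bar> + 1)) * g a k" for k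
    have Msum: "M summable_on UNIV"
      unfolding M_def by (intro summable_on_cmult_right g_summable a)
    have bnd: "norm (c k * T a k z) \<le> M k" if "z \<in> cball z0 1" for k z
    proof -
      have d: "norm (z - z0) \<le> 1" using that by (simp add: dist_norm norm_minus_commute)
      have r: "\<bar>Re z\<bar> \<le> \<bar>Re z0\<bar> + 1"
        using abs_Re_le_cmod[of "z - z0"] d by simp
      have i: "\<bar>Im z\<bar> \<le> \<bar>Im z0\<bar> + 1"
        using abs_Im_le_cmod[of "z - z0"] d by simp
      have i2: "(Im z)^2 \<le> (\<bar>Im z0\<bar> + 1)^2"
        using power_mono[OF i, of 2] by simp
      have "norm (c k * T a k z) = norm (c k) * norm (T a k z)" by (simp add: norm_mult)
      also have "\<dots> \<le> B * (exp (a * (Im z)^2) * exp (a + a * \<bar>Re z\<bar>) * g a k)"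
        by (intro mult_mono cB T_bound) (use a B0 in auto)
      also have "\<dots> \<le> M k"
      proof -
        have e1: "exp (a*(Im z)^2) \<le> exp (a*(\<bar>Im z0\<bar>+1)^2)" using i2 a by (simp add: mult_left_mono)
        have e2: "exp (a + a*\<bar>Re z\<bar>) \<le> exp (a + a*(\<bar>Re z0\<bar>+1))" using r a by (simp add: mult_left_mono)
        have "exp (a * (Im z)^2) * exp (a + a * \<bar>Re z\<bar>) * g a k \<le> exp (a*(\<bar>Im z0\<bar>+1)^2) * exp (a + a*(\<bar>Re z0\<bar>+1)) * g a k"
          by (intro mult_mono e1 e2 order_refl) auto
        then show ?thesis unfolding M_def using B0 by (simp add: mult.assoc mult_left_mono)
      qed
      finally show ?thesis .
    qed
    have ul: "uniform_limit (cball z0 1) (\<lambda>X z. \<Sum>k\<in>X. c k * T a k z) (\<lambda>z. \<Sum>\<^sub>\<infinity>k\<in>UNIV. c k * T a k z) (finite_subsets_at_top UNIV)"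
      by (rule Weierstrass_m_test_general[OF _ Msum]) (use bnd in auto)
    have ev: "eventually (\<lambda>X. continuous_on (cball z0 1) (\<lambda>z. \<Sum>k\<in>X. c k * T a k z) \<and> (\<lambda>z. \<Sum>k\<in>X. c k * T a k z) holomorphic_on ball z0 1) (finite_subsets_at_top UNIV)"
      by (intro always_eventually allI conjI holomorphic_on_imp_continuous_on holomorphic_on_sum)
         (auto simp: T_def intro!: holomorphic_intros)
    obtain "(\<lambda>z. \<Sum>\<^sub>\<infinity>k\<in>UNIV. c k * T a k z) holomorphic_on ball z0 1"
      using holomorphic_uniform_limit[OF ev ul] by auto
    then have "Fc a c holomorphic_on ball z0 1" by (simp add: Fc_def[abs_def])
    then show ?thesis
      by (meson centre_in_ball holomorphic_on_open open_ball zero_less_one)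
  qed
  then show ?thesis by (simp add: holomorphic_on_open)
qed

lemma h_summable:
  fixes a x :: real
  assumes a: "a > 0"
  shows "(\<lambda>k::int. exp (- a * (x - of_int k)^2)) summable_on UNIV"
proof -
  have "(\<lambda>k. exp (a + a * \<bar>x\<bar>) * g a k) summable_on UNIV"
    by (intro summable_on_cmult_right g_summable a)
  then show ?thesis
    by (rule summable_on_comparison_test) (use key_ineq a in auto)
qed

lemma h_bound:
  assumes a: "a > 0"
  shows "(\<Sum>\<^sub>\<infinity>k\<in>UNIV. exp (- a * (x - of_int k)^2)) \<le> exp (2*a) * (\<Sum>\<^sub>\<infinity>k\<in>UNIV. g a k)"
proof -
  define m where "m = \<lfloor>x\<rfloor>"
  define t where "t = x - of_int m"
  have t: "0 \<le> t" "t \<le> 1" unfolding t_def m_def by linarith+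
  have "(\<Sum>\<^sub>\<infinity>k\<in>UNIV. exp (- a * (x - of_int k)^2)) = (\<Sum>\<^sub>\<infinity>j\<in>UNIV. exp (- a * (t - of_int j)^2))"
    by (rule infsum_reindex_bij_witness[of UNIV "\<lambda>j. j + m" "\<lambda>k. k - m"]) (auto simp: t_def algebra_simps)
  also have "\<dots> \<le> (\<Sum>\<^sub>\<infinity>j\<in>UNIV. exp (2*a) * g a j)"
  proof (rule infsum_mono)
    show "(\<lambda>j. exp (- a * (t - of_int j)^2)) summable_on UNIV" by (rule h_summable[OF a])
    show "(\<lambda>j. exp (2*a) * g a j) summable_on UNIV" by (intro summable_on_cmult_right g_summable a)
    fix j :: int
    have "exp (- a * (t - of_int j)^2) \<le> exp (a + a * \<bar>t\<bar>) * g a j" by (rule key_ineq) (use a in auto)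
    also have "\<dots> \<le> exp (2*a) * g a j"
      proof (rule mult_right_mono)
      have "a * \<bar>t\<bar> \<le> a" using t a by (simp add: mult_left_le)
      then show "exp (a + a * \<bar>t\<bar>) \<le> exp (2*a)" by simp
    qed simp
    finally show "exp (- a * (t - of_int j)^2) \<le> exp (2*a) * g a j" .
  qed
  also have "\<dots> = exp (2*a) * (\<Sum>\<^sub>\<infinity>k\<in>UNIV. g a k)"
    by (rule infsum_cmult_right) (intro g_summable a)
  finally show ?thesis .
qed

lemma Fc_bound:
  assumes a: "a > 0" and cB: "\<And>k. norm (c k) \<le> B"
  shows "norm (Fc a c (Complex x y)) \<le> B * exp (a * y^2) * (exp (2*a) * (\<Sum>\<^sub>\<infinity>k\<in>UNIV. g a k))"
proof -
  let ?h = "\<lambda>k::int. exp (- a * (x - of_int k)^2)"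
  have nT: "norm (T a k (Complex x y)) = exp (a * y^2) * ?h k" for k
    by (simp add: norm_T exp_add[symmetric])
  have hs: "(\<lambda>k. B * exp (a * y^2) * ?h k) summable_on UNIV"
    by (intro summable_on_cmult_right h_summable a)
  have le: "norm (c k * T a k (Complex x y)) \<le> B * exp (a * y^2) * ?h k" for k
    unfolding norm_mult nT mult.assoc[symmetric] by (intro mult_right_mono cB) auto
  have abs: "(\<lambda>k. norm (c k * T a k (Complex x y))) summable_on UNIV"
    by (rule summable_on_comparison_test[OF hs]) (use le in auto)
  have "norm (Fc a c (Complex x y)) \<le> (\<Sum>\<^sub>\<infinity>k\<in>UNIV. norm (c k * T a k (Complex x y)))"
    unfolding Fc_def by (rule norm_infsum_bound[OF abs])
  also have "\<dots> \<le> (\<Sum>\<^sub>\<infinity>k\<in>UNIV. B * exp (a * y^2) * ?h k)"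
    by (rule infsum_mono[OF abs hs le])
  also have "\<dots> = B * exp (a * y^2) * (\<Sum>\<^sub>\<infinity>k\<in>UNIV. ?h k)"
    by (rule infsum_cmult_right) (intro h_summable a)
  also have "\<dots> \<le> B * exp (a * y^2) * (exp (2*a) * (\<Sum>\<^sub>\<infinity>k\<in>UNIV. g a k))"
  proof (rule mult_left_mono[OF h_bound[OF a]])
    have "0 \<le> B" using norm_ge_zero cB[of 0] by (rule order_trans)
    then show "0 \<le> B * exp (a * y^2)" by simp
  qed
  finally show ?thesis .
qed

lemma Fc_real: "Fc a c (complex_of_real x) = gauss_series a c x"
  unfolding Fc_def gauss_series_def
  by (intro infsum_cong) (simp add: T_def gauss_def exp_of_real[symmetric])

theorem lemma4p1:
  fixes a :: real
  assumes "a > 0"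
  shows "\<exists>C>0. \<forall>c :: int \<Rightarrow> complex. bounded (range c) \<longrightarrow>
           (\<exists>F. F holomorphic_on UNIV
              \<and> (\<forall>x::real. F (complex_of_real x) = gauss_series a c x)
              \<and> (\<forall>x y::real. norm (F (Complex x y)) \<le> C * linf_norm c * exp (a * y\<^sup>2)))"
proof -
  define K where "K = exp (2*a) * (\<Sum>\<^sub>\<infinity>k\<in>UNIV. g a k)"
  have K0: "K \<ge> 0" unfolding K_def by (intro mult_nonneg_nonneg infsum_nonneg) auto
  show ?thesis
  proof (intro exI[of _ "K + 1"] conjI allI impI)
    show "K + 1 > 0" using K0 by simp
    fix c :: "int \<Rightarrow> complex"
    assume "bounded (range c)"
    then obtain M where M: "\<And>k. norm (c k) \<le> M" by (auto simp: bounded_iff)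
    have bdd: "bdd_above (range (\<lambda>k. norm (c k)))" by (rule bdd_aboveI2[where M=M]) (rule M)
    have cB: "norm (c k) \<le> linf_norm c" for k
      unfolding linf_norm_def by (rule cSUP_upper[OF _ bdd]) simp
    have L0: "0 \<le> linf_norm c" using norm_ge_zero cB[of 0] by (rule order_trans)
    show "\<exists>F. F holomorphic_on UNIV
              \<and> (\<forall>x::real. F (complex_of_real x) = gauss_series a c x)
              \<and> (\<forall>x y::real. norm (F (Complex x y)) \<le> (K + 1) * linf_norm c * exp (a * y\<^sup>2))"
    proof (intro exI[of _ "Fc a c"] conjI allI)
      show "Fc a c holomorphic_on UNIV" by (rule Fc_hol[OF assms cB])
      show "Fc a c (complex_of_real x) = gauss_series a c x" for x by (rule Fc_real)
      fix x y :: real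
      have "norm (Fc a c (Complex x y)) \<le> linf_norm c * exp (a * y^2) * K"
        unfolding K_def by (rule Fc_bound[OF assms cB])
      also have "\<dots> \<le> linf_norm c * exp (a * y^2) * (K + 1)"
        using L0 by (intro mult_left_mono) auto
      finally show "norm (Fc a c (Complex x y)) \<le> (K + 1) * linf_norm c * exp (a * y\<^sup>2)"
        by (simp add: algebra_simps)
    qed
  qed
qed

end
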